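(* Let $n\ge1$ be an integer, $1<p<p^*(n)$, where $p^*(n)=\infty$ if $n=1,2$ and $p^*(n)=\frac{n+2}{n-2}$ if $n\ge3$. Let $A_0$ be the unique positive radially symmetric classical solution of $\Delta A - A + A^p=0$ in $\mathbb{R}^n$, $\lim_{|x|\to\infty}A(x)=0$, $A(0)=\max A$, let $\alpha=\int_{\mathbb{R}^n}A_0^2\,dy$, and let $f(\omega)=(\omega-1)\omega^{\frac n2-\frac{2}{p-1}}$ for $\omega>0$. For $k>0$ consider the problem \[ \Delta A - A + A^p - kA\int_{\mathbb{R}^n} A^2\,dx = 0 \ \text{ in } \mathbb{R}^n,\qquad \lim_{|x|\to\infty}A(x)=0,\qquad A(0)=\max_{x\in\mathbb{R}^n}A(x). \tag{P} \] (i) If $k>0$ and $\omega>0$ satisfy $f(\omega)=k\alpha$, then $A(x):=\omega^{\frac{1}{p-1}}A_0(\sqrt{\omega}\,x)$ is a solution of (P). (ii) Conversely, if $A$ is a positive radially symmetric classical solution of (P) with $k>0$, then there exists $\omega>0$ with $f(\omega)=k\alpha$, and $A(x)=\omega^{\frac{1}{p-1}}A_0(\sqrt{\omega}\,x)$ for all $x\in\mathbb{R}^n$.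
   Context: The existence and uniqueness of $A_0$ for $1<p<p^*(n)$, and its exponential decay (so $0<\alpha<\infty$), are known facts used to define $A_0$ and $\alpha$. *)

theory Defs
  imports "HOL-Analysis.Analysis"
begin

text \<open>Functions on R^n are modelled as functions on real^'n (n = CARD('n) >= 1).\<close>

definition C2 :: "(real^'n \<Rightarrow> real) \<Rightarrow> bool" where
  "C2 f \<longleftrightarrow> (\<forall>x. f differentiable (at x))
     \<and> (\<forall>v x. (\<lambda>y. frechet_derivative f (at y) v) differentiable (at x))
     \<and> (\<forall>v w. continuous_on UNIV
            (\<lambda>y. frechet_derivative (\<lambda>z. frechet_derivative f (at z) v) (at y) w))"

definition laplacian :: "(real^'n \<Rightarrow> real) \<Rightarrow> real^'n \<Rightarrow> real" where
  "laplacian f x = (\<Sum>i\<in>UNIV.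
      frechet_derivative (\<lambda>y. frechet_derivative f (at y) (axis i 1)) (at x) (axis i 1))"

definition radial :: "(real^'n \<Rightarrow> real) \<Rightarrow> bool" where
  "radial f \<longleftrightarrow> (\<forall>x y. norm x = norm y \<longrightarrow> f x = f y)"

definition subcritical :: "nat \<Rightarrow> real \<Rightarrow> bool" where
  "subcritical n p \<longleftrightarrow> 1 < p \<and> (n \<ge> 3 \<longrightarrow> p < (real n + 2) / (real n - 2))"

definition ground_state :: "real \<Rightarrow> (real^'n \<Rightarrow> real) \<Rightarrow> bool" where
  "ground_state p A \<longleftrightarrow> C2 A \<and> (\<forall>x. A x > 0) \<and> radial A
     \<and> (\<forall>x. laplacian A x - A x + A x powr p = 0)
     \<and> (A \<longlongrightarrow> 0) at_infinity \<and> (\<forall>x. A x \<le> A 0)"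

text \<open>Classical solution of problem (P) (the nonlocal term requires A^2 integrable).\<close>
definition solves_P :: "real \<Rightarrow> real \<Rightarrow> (real^'n \<Rightarrow> real) \<Rightarrow> bool" where
  "solves_P p k A \<longleftrightarrow> C2 A \<and> (\<lambda>x. (A x)^2) integrable_on UNIV
     \<and> (\<forall>x. laplacian A x - A x + A x powr p - k * A x * integral UNIV (\<lambda>y. (A y)^2) = 0)
     \<and> (A \<longlongrightarrow> 0) at_infinity \<and> (\<forall>x. A x \<le> A 0)"

definition fw :: "nat \<Rightarrow> real \<Rightarrow> real \<Rightarrow> real" where
  "fw n p \<omega> = (\<omega> - 1) * \<omega> powr (real n / 2 - 2 / (p - 1))"

end

theory Submission
  imports Defs
begin

lemma has_integral_scale_UNIV:
  fixes f :: "'a::euclidean_space \<Rightarrow> real"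
  assumes f: "(f has_integral i) UNIV" and m: "m > 0"
  shows "((\<lambda>x. f (m *\<^sub>R x)) has_integral (i / m ^ DIM('a))) UNIV"
proof -
  have "\<forall>e>0. \<exists>B>0. \<forall>a b. ball 0 B \<subseteq> cbox a b \<longrightarrow>
      (\<exists>z. ((\<lambda>x. if x \<in> UNIV then f (m *\<^sub>R x) else 0) has_integral z) (cbox a b) \<and> norm (z - i / m ^ DIM('a)) < e)"
  proof (intro allI impI)
  fix e :: real assume e: "e > 0"
  have mD: "m ^ DIM('a) > 0" using m by simp
  obtain B where B: "B > 0" and HB: "\<And>a b. ball 0 B \<subseteq> cbox a b \<Longrightarrow>
      (\<exists>z. (f has_integral z) (cbox a b) \<and> norm (z - i) < e * m ^ DIM('a))"
  proof -
    have "e * m ^ DIM('a) > 0" using e mD by simp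
    then show ?thesis using f[unfolded has_integral'[of f]] that by (simp del: mult_pos_pos) blast
  qed
  show "\<exists>B>0. \<forall>a b. ball 0 B \<subseteq> cbox a b \<longrightarrow>
      (\<exists>z. ((\<lambda>x. if x \<in> UNIV then f (m *\<^sub>R x) else 0) has_integral z) (cbox a b) \<and> norm (z - i / m ^ DIM('a)) < e)"
  proof (rule exI[of _ "B / m"], intro conjI allI impI)
    show "B / m > 0" using B m by simp
    fix a b :: 'a assume sub: "ball 0 (B / m) \<subseteq> cbox a b"
    have "ball 0 B \<subseteq> cbox (m *\<^sub>R a) (m *\<^sub>R b)"
    proof
      fix y :: 'a assume "y \<in> ball 0 B"
      then have "(1/m) *\<^sub>R y \<in> ball 0 (B / m)" using m by (simp add: divide_simps)
      then have "(1/m) *\<^sub>R y \<in> cbox a b" using sub by blast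
      then show "y \<in> cbox (m *\<^sub>R a) (m *\<^sub>R b)" using m
        by (auto simp: mem_box inner_scaleR_left field_simps)
    qed
    then obtain z where z: "(f has_integral z) (cbox (m *\<^sub>R a) (m *\<^sub>R b))"
      and nz: "norm (z - i) < e * m ^ DIM('a)" using HB by blast
    have "((\<lambda>x. f (m *\<^sub>R x + 0)) has_integral (z /\<^sub>R m ^ DIM('a)))
           (cbox ((m *\<^sub>R a - 0) /\<^sub>R m) ((m *\<^sub>R b - 0) /\<^sub>R m))"
      by (rule has_integral_affinity'[OF z m])
    then have "((\<lambda>x. f (m *\<^sub>R x)) has_integral (z / m ^ DIM('a))) (cbox a b)"
      using m by (simp add: divide_inverse_commute)
    moreover have "norm (z / m ^ DIM('a) - i / m ^ DIM('a)) < e"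
    proof -
      have "norm (z / m ^ DIM('a) - i / m ^ DIM('a)) = \<bar>z - i\<bar> / m ^ DIM('a)"
        using mD by (simp add: diff_divide_distrib[symmetric])
      also have "\<dots> < e" using nz mD by (simp add: divide_less_eq)
      finally show ?thesis .
    qed
    ultimately have "\<exists>z. ((\<lambda>x. if x \<in> UNIV then f (m *\<^sub>R x) else 0) has_integral z) (cbox a b) \<and> norm (z - i / m ^ DIM('a)) < e"
      by auto
    then show "\<exists>z. ((\<lambda>x. if x \<in> UNIV then f (m *\<^sub>R x) else 0) has_integral z) (cbox a b) \<and> norm (z - i / m ^ DIM('a)) < e" 
      by this
  qed
  qed
  then show ?thesis by (subst has_integral') 
qed

lemma scale_deriv:
  fixes f :: "'a::real_normed_vector \<Rightarrow> real"
  assumes "f differentiable (at (s *\<^sub>R x))"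
  shows "(\<lambda>y. c * f (s *\<^sub>R y)) differentiable (at x)"
    and "frechet_derivative (\<lambda>y. c * f (s *\<^sub>R y)) (at x) = (\<lambda>v. c * s * frechet_derivative f (at (s *\<^sub>R x)) v)"
proof -
  let ?f' = "frechet_derivative f (at (s *\<^sub>R x))"
  have d: "(f has_derivative ?f') (at (s *\<^sub>R x))" using assms frechet_derivative_works by blast
  have l: "linear ?f'" using d has_derivative_linear by blast
  have sc: "((\<lambda>y. s *\<^sub>R y) has_derivative (\<lambda>v. s *\<^sub>R v)) (at x)"
    by (intro derivative_eq_intros) auto
  have "((\<lambda>y. f (s *\<^sub>R y)) has_derivative (\<lambda>v. ?f' (s *\<^sub>R v))) (at x)"
    using has_derivative_compose[OF sc d] by simp
  then have "((\<lambda>y. c * f (s *\<^sub>R y)) has_derivative (\<lambda>v. c * ?f' (s *\<^sub>R v))) (at x)"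
    by (rule has_derivative_mult_right)
  moreover have "(\<lambda>v. c * ?f' (s *\<^sub>R v)) = (\<lambda>v. c * s * ?f' v)"
    using linear_cmul[OF l] by auto
  ultimately have D: "((\<lambda>y. c * f (s *\<^sub>R y)) has_derivative (\<lambda>v. c * s * ?f' v)) (at x)" by simp
  then show "(\<lambda>y. c * f (s *\<^sub>R y)) differentiable (at x)" unfolding differentiable_def by blast
  show "frechet_derivative (\<lambda>y. c * f (s *\<^sub>R y)) (at x) = (\<lambda>v. c * s * ?f' v)"
    using frechet_derivative_at[OF D] by simp
qed

lemma C2_scale:
  fixes f :: "real^'n \<Rightarrow> real"
  assumes "C2 f"
  shows "C2 (\<lambda>y. c * f (s *\<^sub>R y))"
    and "laplacian (\<lambda>y. c * f (s *\<^sub>R y)) x = c * s^2 * laplacian f (s *\<^sub>R x)"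
proof -
  let ?g = "\<lambda>y. c * f (s *\<^sub>R y)"
  have f1: "\<And>x. f differentiable (at x)"
    and f2: "\<And>v x. (\<lambda>y. frechet_derivative f (at y) v) differentiable (at x)"
    and f3: "\<And>v w. continuous_on UNIV
            (\<lambda>y. frechet_derivative (\<lambda>z. frechet_derivative f (at z) v) (at y) w)"
    using assms unfolding C2_def by blast+
  have g1: "\<And>x. ?g differentiable (at x)" using scale_deriv(1)[OF f1] by blast
  have Dg: "\<And>v. (\<lambda>y. frechet_derivative ?g (at y) v) = (\<lambda>y. (c * s) * frechet_derivative f (at (s *\<^sub>R y)) v)"
    using scale_deriv(2)[OF f1] by simp
  have g2: "\<And>v x. (\<lambda>y. frechet_derivative ?g (at y) v) differentiable (at x)"
    unfolding Dg by (rule scale_deriv(1)[OF f2])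
  have DDg: "\<And>v w y. frechet_derivative (\<lambda>y. frechet_derivative ?g (at y) v) (at y) w
      = c * s * s * frechet_derivative (\<lambda>z. frechet_derivative f (at z) v) (at (s *\<^sub>R y)) w"
    unfolding Dg by (subst scale_deriv(2)[OF f2]) simp
  have g3: "\<And>v w. continuous_on UNIV
            (\<lambda>y. frechet_derivative (\<lambda>z. frechet_derivative ?g (at z) v) (at y) w)"
  proof -
    fix v w
    have "continuous_on UNIV (\<lambda>y. c * s * s * frechet_derivative (\<lambda>z. frechet_derivative f (at z) v) (at (s *\<^sub>R y)) w)"
      by (intro continuous_on_mult_left continuous_on_compose2[OF f3[of v w]] continuous_intros) auto
    then show "continuous_on UNIV
            (\<lambda>y. frechet_derivative (\<lambda>z. frechet_derivative ?g (at z) v) (at y) w)"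
      unfolding DDg .
  qed
  show "C2 ?g" unfolding C2_def using g1 g2 g3 by blast
  show "laplacian ?g x = c * s^2 * laplacian f (s *\<^sub>R x)"
    unfolding laplacian_def DDg by (simp add: sum_distrib_left power2_eq_square mult.assoc)
qed

lemma tendsto_scale:
  fixes f :: "'a::real_normed_vector \<Rightarrow> real"
  assumes "(f \<longlongrightarrow> 0) at_infinity" and "s \<noteq> 0"
  shows "((\<lambda>x. c * f (s *\<^sub>R x)) \<longlongrightarrow> 0) at_infinity"
proof -
  have "filterlim (\<lambda>x. \<bar>s\<bar> * norm x) at_top at_infinity"
    using assms(2) by (intro filterlim_tendsto_pos_mult_at_top[OF tendsto_const _ filterlim_norm_at_top]) auto
  then have "filterlim (\<lambda>x. norm (s *\<^sub>R x)) at_top at_infinity" by simp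
  then have "filterlim (\<lambda>x. s *\<^sub>R x) at_infinity at_infinity"
    by (rule filterlim_norm_at_top_imp_at_infinity)
  then have "((\<lambda>x. f (s *\<^sub>R x)) \<longlongrightarrow> 0) at_infinity"
    using assms(1) filterlim_compose by blast
  then show ?thesis using tendsto_mult_right_zero by blast
qed

lemma int_scale:
  fixes A0 :: "real^'n \<Rightarrow> real"
  assumes "(\<lambda>y. (A0 y)^2) integrable_on UNIV" and w: "\<omega> > 0"
  shows "((\<lambda>x. (\<omega> powr (1 / (p - 1)) * A0 (sqrt \<omega> *\<^sub>R x))^2) has_integral
            integral UNIV (\<lambda>y. (A0 y)^2) * \<omega> powr (2 / (p - 1) - real CARD('n) / 2)) UNIV"
proof -
  let ?a = "integral UNIV (\<lambda>y. (A0 y)^2)"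
  have "((\<lambda>y. (A0 y)^2) has_integral ?a) UNIV" using assms(1) by blast
  from has_integral_scale_UNIV[OF this, of "sqrt \<omega>"] w
  have "((\<lambda>x. (A0 (sqrt \<omega> *\<^sub>R x))^2) has_integral ?a / sqrt \<omega> ^ CARD('n)) UNIV" by simp
  then have "((\<lambda>x. (\<omega> powr (1 / (p - 1)))^2 * (A0 (sqrt \<omega> *\<^sub>R x))^2) has_integral (\<omega> powr (1 / (p - 1)))^2 * (?a / sqrt \<omega> ^ CARD('n))) UNIV"
    by (rule has_integral_mult_right)
  moreover have "(\<omega> powr (1 / (p - 1)))^2 * (?a / sqrt \<omega> ^ CARD('n)) = ?a * \<omega> powr (2 / (p - 1) - real CARD('n) / 2)"
  proof -
    have "(\<omega> powr (1 / (p - 1)))^2 = \<omega> powr (2 / (p - 1))"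
    proof -
      have "(\<omega> powr (1 / (p - 1)))^2 = (\<omega> powr (1 / (p - 1))) powr 2"
        using w by (simp add: powr_realpow)
      also have "\<dots> = \<omega> powr (2 / (p - 1))" by (simp add: powr_powr)
      finally show ?thesis .
    qed
    moreover have "sqrt \<omega> ^ CARD('n) = \<omega> powr (real CARD('n) / 2)"
    proof -
      have "sqrt \<omega> ^ CARD('n) = (\<omega> powr (1/2)) powr real CARD('n)"
        using w by (simp add: powr_half_sqrt powr_realpow)
      also have "\<dots> = \<omega> powr (real CARD('n) / 2)" by (simp add: powr_powr)
      finally show ?thesis .
    qed
    ultimately show ?thesis using w by (simp add: powr_diff)
  qed
  ultimately show ?thesis by (simp add: power_mult_distrib)
qed

lemma pw1:
  fixes p w :: real assumes "p > 1" "w > 0"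
  shows "(w powr (1 / (p - 1))) powr p = w powr (1 / (p - 1)) * w"
proof -
  have "(w powr (1 / (p - 1))) powr p = w powr (1 / (p - 1) + 1)"
    using assms by (simp add: powr_powr field_simps)
  then show ?thesis using assms by (simp add: powr_add)
qed

lemma pw2:
  fixes p w :: real assumes "p > 1" "w > 0"
  shows "(w powr (- 1 / (p - 1))) powr p = w powr (- 1 / (p - 1)) / w"
proof -
  have "(w powr (- 1 / (p - 1))) powr p = w powr (- 1 / (p - 1) - 1)"
    using assms by (simp add: powr_powr field_simps)
  then show ?thesis using assms by (simp add: powr_diff)
qed

theorem lemma2:
  fixes p :: real and A0 :: "real^'n \<Rightarrow> real" and \<alpha> :: real
  assumes "subcritical CARD('n) p"
    and "ground_state p A0"
    and "\<forall>B :: real^'n \<Rightarrow> real. ground_state p B \<longrightarrow> B = A0"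
    and "(\<lambda>y. (A0 y)^2) integrable_on UNIV"
    and "\<alpha> = integral UNIV (\<lambda>y. (A0 y)^2)"
  shows "(\<forall>k \<omega>. k > 0 \<longrightarrow> \<omega> > 0 \<longrightarrow> fw CARD('n) p \<omega> = k * \<alpha> \<longrightarrow>
            solves_P p k (\<lambda>x. \<omega> powr (1 / (p - 1)) * A0 (sqrt \<omega> *\<^sub>R x)))
       \<and> (\<forall>k (A :: real^'n \<Rightarrow> real). k > 0 \<longrightarrow> solves_P p k A \<longrightarrow> (\<forall>x. A x > 0) \<longrightarrow> radial A \<longrightarrow>
            (\<exists>\<omega>>0. fw CARD('n) p \<omega> = k * \<alpha> \<and>
                (\<forall>x. A x = \<omega> powr (1 / (p - 1)) * A0 (sqrt \<omega> *\<^sub>R x))))"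
proof (intro conjI allI impI)
  have p1: "p > 1" using assms(1) unfolding subcritical_def by blast
  have G: "C2 A0" "\<And>x. A0 x > 0" "radial A0" "\<And>x. laplacian A0 x - A0 x + A0 x powr p = 0"
    "(A0 \<longlongrightarrow> 0) at_infinity" "\<And>x. A0 x \<le> A0 0"
    using assms(2) unfolding ground_state_def by blast+
  let ?n = "real CARD('n)"
  {
    fix k \<omega> :: real
    assume k: "k > 0" and w: "\<omega> > 0" and fweq: "fw CARD('n) p \<omega> = k * \<alpha>"
    define c where "c = \<omega> powr (1 / (p - 1))"
    have c: "c > 0" using w c_def by simp
    let ?A = "\<lambda>x. c * A0 (sqrt \<omega> *\<^sub>R x)"
    have hi: "((\<lambda>x. (?A x)^2) has_integral \<alpha> * \<omega> powr (2 / (p - 1) - ?n / 2)) UNIV"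
      using int_scale[OF assms(4) w, of p] assms(5) unfolding c_def by simp
    have I: "k * integral UNIV (\<lambda>x. (?A x)^2) = \<omega> - 1"
    proof -
      have "k * integral UNIV (\<lambda>x. (?A x)^2) = k * \<alpha> * \<omega> powr (2 / (p - 1) - ?n / 2)"
        using hi by (simp add: integral_unique)
      also have "\<dots> = (\<omega> - 1) * (\<omega> powr (?n / 2 - 2 / (p - 1)) * \<omega> powr (2 / (p - 1) - ?n / 2))"
        using fweq unfolding fw_def by simp
      also have "\<omega> powr (?n / 2 - 2 / (p - 1)) * \<omega> powr (2 / (p - 1) - ?n / 2) = 1"
        using w by (simp add: powr_add[symmetric])
      finally show ?thesis by simp
    qed
    have "solves_P p k ?A"
      unfolding solves_P_def
    proof (intro conjI allI)
      show "C2 ?A" by (rule C2_scale(1)[OF G(1)])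
      show "(\<lambda>x. (?A x)^2) integrable_on UNIV" using hi by blast
      show "(?A \<longlongrightarrow> 0) at_infinity" using tendsto_scale[OF G(5)] w by simp
      fix x :: "real^'n"
      show "?A x \<le> ?A 0" using G(6) c by simp
      let ?y = "sqrt \<omega> *\<^sub>R x"
      have L: "laplacian ?A x = c * \<omega> * laplacian A0 ?y"
        using C2_scale(2)[OF G(1)] w by simp
      have P: "?A x powr p = c * \<omega> * A0 ?y powr p"
        using pw1[OF p1 w] c G(2)[of ?y] unfolding c_def by (simp add: powr_mult)
      have "laplacian ?A x - ?A x + ?A x powr p - k * ?A x * integral UNIV (\<lambda>y. (?A y)^2)
          = c * \<omega> * (laplacian A0 ?y - A0 ?y + A0 ?y powr p) + c * A0 ?y * (\<omega> - 1 - k * integral UNIV (\<lambda>y. (?A y)^2))"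
        unfolding L P by (simp add: algebra_simps)
      then show "laplacian ?A x - ?A x + ?A x powr p - k * ?A x * integral UNIV (\<lambda>y. (?A y)^2) = 0"
        using G(4)[of ?y] I by simp
    qed
    then show "solves_P p k (\<lambda>x. \<omega> powr (1 / (p - 1)) * A0 (sqrt \<omega> *\<^sub>R x))" unfolding c_def .
  }
  fix k :: real and A :: "real^'n \<Rightarrow> real"
  assume k: "k > 0" and sA: "solves_P p k A" and Apos: "\<forall>x. A x > 0" and rA: "radial A"
  have S: "C2 A" "(\<lambda>x. (A x)^2) integrable_on UNIV"
    "\<And>x. laplacian A x - A x + A x powr p - k * A x * integral UNIV (\<lambda>y. (A y)^2) = 0"
    "(A \<longlongrightarrow> 0) at_infinity" "\<And>x. A x \<le> A 0"
    using sA unfolding solves_P_def by blast+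
  define I where "I = integral UNIV (\<lambda>y. (A y)^2)"
  have I0: "I \<ge> 0" unfolding I_def by (rule integral_nonneg[OF S(2)]) simp
  define \<omega> where "\<omega> = 1 + k * I"
  have w: "\<omega> > 0" using I0 k \<omega>_def by (simp add: add_pos_nonneg)
  define c where "c = \<omega> powr (- 1 / (p - 1))"
  define s where "s = 1 / sqrt \<omega>"
  have c: "c > 0" using c_def w by simp
  have s: "s > 0" using s_def w by simp
  let ?B = "\<lambda>y. c * A (s *\<^sub>R y)"
  have "ground_state p ?B"
    unfolding ground_state_def
  proof (intro conjI allI)
    show "C2 ?B" by (rule C2_scale(1)[OF S(1)])
    show "radial ?B" using rA s unfolding radial_def by simp
    show "(?B \<longlongrightarrow> 0) at_infinity" using tendsto_scale[OF S(4)] s by simp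
    fix x :: "real^'n"
    show "?B x > 0" using c Apos by simp
    show "?B x \<le> ?B 0" using S(5) c by simp
    let ?y = "s *\<^sub>R x"
    have L: "laplacian ?B x = c / \<omega> * laplacian A ?y"
      using C2_scale(2)[OF S(1)] w s_def by (simp add: power_divide)
    have P: "?B x powr p = c / \<omega> * A ?y powr p"
      using pw2[OF p1 w] c Apos unfolding c_def by (simp add: powr_mult less_imp_le)
    have E: "laplacian A ?y = \<omega> * A ?y - A ?y powr p"
      using S(3)[of ?y] unfolding \<omega>_def I_def by (simp add: algebra_simps)
    show "laplacian ?B x - ?B x + ?B x powr p = 0"
      unfolding L P E using w by (simp add: field_simps)
  qed
  then have BA: "?B = A0" using assms(3) by blast
  have Ax: "\<And>x. A x = \<omega> powr (1 / (p - 1)) * A0 (sqrt \<omega> *\<^sub>R x)"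
  proof -
    fix x
    have "A0 (sqrt \<omega> *\<^sub>R x) = c * A x"
      using fun_cong[OF BA, of "sqrt \<omega> *\<^sub>R x"] w s_def by simp
    moreover have "\<omega> powr (1 / (p - 1)) * c = 1"
      unfolding c_def using w by (simp add: powr_add[symmetric])
    ultimately show "A x = \<omega> powr (1 / (p - 1)) * A0 (sqrt \<omega> *\<^sub>R x)"
      by (metis mult.assoc mult_1)
  qed
  have "I = \<alpha> * \<omega> powr (2 / (p - 1) - ?n / 2)"
    using int_scale[OF assms(4) w, of p] assms(5) unfolding I_def Ax[abs_def]
    by (simp add: integral_unique)
  then have "I * \<omega> powr (?n / 2 - 2 / (p - 1)) = \<alpha> * (\<omega> powr (2 / (p - 1) - ?n / 2) * \<omega> powr (?n / 2 - 2 / (p - 1)))"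
    by simp
  also have "\<omega> powr (2 / (p - 1) - ?n / 2) * \<omega> powr (?n / 2 - 2 / (p - 1)) = 1"
    using w by (simp add: powr_add[symmetric])
  finally have "I * \<omega> powr (?n / 2 - 2 / (p - 1)) = \<alpha>" by simp
  then have "fw CARD('n) p \<omega> = k * \<alpha>"
    unfolding fw_def by (simp add: \<omega>_def)
  then show "\<exists>\<omega>>0. fw CARD('n) p \<omega> = k * \<alpha> \<and>
                (\<forall>x. A x = \<omega> powr (1 / (p - 1)) * A0 (sqrt \<omega> *\<^sub>R x))"
    using w Ax by blast
qed

end
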